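(* Let $p,q$ be coprime integers and let $G(p,q)=\langle a,b\mid a^2ba^2b^2a^{-1}b^2,\ m^pl^q\rangle$, where $m=a^{-1}b^{-2}$ and $l=ab^{-1}a^2m^{-18}$. Let $k\in G(p,q)$ be an element with $m=k^q$ and $l=k^{-p}$. Suppose $G(p,q)$ acts on the right on a partially ordered set $(P,\le)$, $x\mapsto x g$, preserving the order. If some $x\in P$ satisfies either (1) $xk=x$ and $x$, $xa$ are comparable in $P$, or (2) $xa=x$ and $x$, $xk$ are comparable in $P$, then $xg=x$ for every $g\in G(p,q)$.
   Context: $G(p,q)$ is the fundamental group of $p/q$-Dehn surgery on the $(-2,3,7)$-pretzel knot, with $m$, $l$ the meridian and longitude. An element $k$ with $m=k^q$, $l=k^{-p}$ exists in $G(p,q)$. In the relations one has $k^{p-18q}=a^{-2}ba^{-1}$. *)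

theory Defs
  imports "HOL-Algebra.Algebra" "HOL-Computational_Algebra.Primes"
begin

definition pm :: "('g, 'c) monoid_scheme \<Rightarrow> 'g \<Rightarrow> 'g \<Rightarrow> 'g" where
  "pm G a b = inv\<^bsub>G\<^esub> a \<otimes>\<^bsub>G\<^esub> (b [^]\<^bsub>G\<^esub> (-2::int))"

definition pl :: "('g, 'c) monoid_scheme \<Rightarrow> 'g \<Rightarrow> 'g \<Rightarrow> 'g" where
  "pl G a b = a \<otimes>\<^bsub>G\<^esub> inv\<^bsub>G\<^esub> b \<otimes>\<^bsub>G\<^esub> (a [^]\<^bsub>G\<^esub> (2::int))
      \<otimes>\<^bsub>G\<^esub> (pm G a b [^]\<^bsub>G\<^esub> (-18::int))"

definition Gpq_rels :: "('g, 'c) monoid_scheme \<Rightarrow> int \<Rightarrow> int \<Rightarrow> 'g \<Rightarrow> 'g \<Rightarrow> bool" where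
  "Gpq_rels G p q a b \<longleftrightarrow> a \<in> carrier G \<and> b \<in> carrier G \<and>
     (a [^]\<^bsub>G\<^esub> (2::int)) \<otimes>\<^bsub>G\<^esub> b \<otimes>\<^bsub>G\<^esub> (a [^]\<^bsub>G\<^esub> (2::int))
       \<otimes>\<^bsub>G\<^esub> (b [^]\<^bsub>G\<^esub> (2::int)) \<otimes>\<^bsub>G\<^esub> inv\<^bsub>G\<^esub> a
       \<otimes>\<^bsub>G\<^esub> (b [^]\<^bsub>G\<^esub> (2::int)) = \<one>\<^bsub>G\<^esub> \<and>
     (pm G a b [^]\<^bsub>G\<^esub> p) \<otimes>\<^bsub>G\<^esub> (pl G a b [^]\<^bsub>G\<^esub> q) = \<one>\<^bsub>G\<^esub>"

text \<open>Targets are quantified over groups on the countable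
  type nat, which suffices since the image of a two-generated group is countable.\<close>
definition is_Gpq :: "('g, 'c) monoid_scheme \<Rightarrow> int \<Rightarrow> int \<Rightarrow> 'g \<Rightarrow> 'g \<Rightarrow> bool" where
  "is_Gpq G p q a b \<longleftrightarrow> group G \<and> Gpq_rels G p q a b \<and> generate G {a, b} = carrier G \<and>
     (\<forall>(H :: nat monoid) h1 h2. group H \<and> Gpq_rels H p q h1 h2 \<longrightarrow>
        (\<exists>\<phi> \<in> hom G H. \<phi> a = h1 \<and> \<phi> b = h2))"

definition order_pres_right_action :: "('g, 'c) monoid_scheme \<Rightarrow> ('p::order \<Rightarrow> 'g \<Rightarrow> 'p) \<Rightarrow> bool" where
  "order_pres_right_action G act \<longleftrightarrow>
     (\<forall>x. act x \<one>\<^bsub>G\<^esub> = x) \<and>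
     (\<forall>x g h. g \<in> carrier G \<longrightarrow> h \<in> carrier G \<longrightarrow> act (act x g) h = act x (g \<otimes>\<^bsub>G\<^esub> h)) \<and>
     (\<forall>x y g. g \<in> carrier G \<longrightarrow> x \<le> y \<longrightarrow> act x g \<le> act y g)"

end

theory Submission
  imports Defs
begin


lemma act_mult:
  assumes "order_pres_right_action G act" "g \<in> carrier G" "h \<in> carrier G"
  shows "act y (g \<otimes>\<^bsub>G\<^esub> h) = act (act y g) h"
  using assms unfolding order_pres_right_action_def by auto

lemma act_one:
  assumes "order_pres_right_action G act"
  shows "act y \<one>\<^bsub>G\<^esub> = y"
  using assms unfolding order_pres_right_action_def by auto

lemma act_cancel:
  assumes "group G" "order_pres_right_action G act" "g \<in> carrier G"
  shows "act (act y g) (inv\<^bsub>G\<^esub> g) = y"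
  using assms act_mult[OF assms(2)] act_one[OF assms(2)]
  by (metis group.r_inv group.inv_closed)

lemma fix_inv:
  assumes "group G" "order_pres_right_action G act" "g \<in> carrier G" "act x g = x"
  shows "act x (inv\<^bsub>G\<^esub> g) = x"
  using act_cancel[OF assms(1-3), of x] assms(4) by simp

lemma fix_nat_pow:
  assumes "group G" "order_pres_right_action G act" "g \<in> carrier G" "act x g = x"
  shows "act x (g [^]\<^bsub>G\<^esub> (n::nat)) = x"
proof (induction n)
  case 0 then show ?case using act_one[OF assms(2)] by simp
next
  case (Suc n)
  have "act x (g [^]\<^bsub>G\<^esub> Suc n) = act (act x (g [^]\<^bsub>G\<^esub> n)) g"
    using act_mult[OF assms(2)] assms(1,3) by (simp add: monoid.nat_pow_closed group.is_monoid)
  then show ?case using Suc assms(4) by simp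
qed

lemma fix_int_pow:
  assumes "group G" "order_pres_right_action G act" "g \<in> carrier G" "act x g = x"
  shows "act x (g [^]\<^bsub>G\<^esub> (n::int)) = x"
proof (cases "n < 0")
  case True
  have c: "g [^]\<^bsub>G\<^esub> (nat (-n)) \<in> carrier G"
    by (rule monoid.nat_pow_closed[OF group.is_monoid[OF assms(1)] assms(3)])
  have "g [^]\<^bsub>G\<^esub> n = inv\<^bsub>G\<^esub> (g [^]\<^bsub>G\<^esub> (nat (-n)))"
    using True by (simp only: int_pow_def2 if_True)
  then show ?thesis using fix_inv[OF assms(1,2) c fix_nat_pow[OF assms]] by (simp only:)
next
  case False
  have "g [^]\<^bsub>G\<^esub> n = g [^]\<^bsub>G\<^esub> (nat n)"
    using False by (simp only: int_pow_def2 if_False)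
  then show ?thesis using fix_nat_pow[OF assms] by (simp only:)
qed

lemma lt_pres:
  assumes "group G" "order_pres_right_action G act" "g \<in> carrier G" "y < z"
  shows "act y g < act z g"
proof -
  have "act y g \<le> act z g" using assms unfolding order_pres_right_action_def by auto
  moreover have "act y g \<noteq> act z g"
    using act_cancel[OF assms(1-3)] assms(4) by (metis less_irrefl)
  ultimately show ?thesis by simp
qed

lemma word4:
  assumes G: "group G" and A: "order_pres_right_action G act"
    and Rinv: "\<And>y z g. g \<in> carrier G \<Longrightarrow> R y z \<Longrightarrow> R (act y g) (act z g)"
    and Rtrans: "\<And>y z w. R y z \<Longrightarrow> R z w \<Longrightarrow> R y w"
    and Rirr: "\<And>y. \<not> R y y"
    and c: "c \<in> carrier G" "R x (act x c)"
    and h: "h1 \<in> carrier G" "h2 \<in> carrier G" "h3 \<in> carrier G" "h4 \<in> carrier G"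
    and hf: "act x h1 = x" "act x h2 = x" "act x h3 = x" "act x h4 = x"
    and n: "0 < (n1::nat) \<or> 0 < (n2::nat) \<or> 0 < (n3::nat) \<or> 0 < (n4::nat)"
    and w: "(c [^]\<^bsub>G\<^esub> n1 \<otimes>\<^bsub>G\<^esub> h1) \<otimes>\<^bsub>G\<^esub> (c [^]\<^bsub>G\<^esub> n2 \<otimes>\<^bsub>G\<^esub> h2)
       \<otimes>\<^bsub>G\<^esub> (c [^]\<^bsub>G\<^esub> n3 \<otimes>\<^bsub>G\<^esub> h3) \<otimes>\<^bsub>G\<^esub> (c [^]\<^bsub>G\<^esub> n4 \<otimes>\<^bsub>G\<^esub> h4) = \<one>\<^bsub>G\<^esub>"
  shows False
proof -
  define S where "S bb y \<longleftrightarrow> R x y \<or> (\<not> bb \<and> y = x)" for bb y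
  have cl: "c [^]\<^bsub>G\<^esub> (n::nat) \<in> carrier G" for n
    using G c by (simp add: monoid.nat_pow_closed group.is_monoid)
  have cpos: "R x (act x (c [^]\<^bsub>G\<^esub> n))" if "0 < n" for n :: nat
    using that
  proof (induction n)
    case 0 then show ?case by simp
  next
    case (Suc n)
    show ?case
    proof (cases "n = 0")
      case True
      then show ?thesis using c G by (simp add: act_one[OF A] group.is_monoid)
    next
      case False
      then have "R x (act x (c [^]\<^bsub>G\<^esub> n))" using Suc by simp
      then have "R (act x c) (act (act x (c [^]\<^bsub>G\<^esub> n)) c)" using Rinv c by blast
      moreover have "act x (c [^]\<^bsub>G\<^esub> Suc n) = act (act x (c [^]\<^bsub>G\<^esub> n)) c"
        using act_mult[OF A cl c(1)] by simp
      ultimately show ?thesis using Rtrans[OF c(2)] by simp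
    qed
  qed
  have step: "S (bb \<or> 0 < n) (act y (c [^]\<^bsub>G\<^esub> n \<otimes>\<^bsub>G\<^esub> h))"
    if "S bb y" "h \<in> carrier G" "act x h = x" for bb y and n :: nat and h
  proof -
    have 1: "S (bb \<or> 0 < n) (act y (c [^]\<^bsub>G\<^esub> n))"
    proof (cases "n = 0")
      case True then show ?thesis using that(1) by (simp add: act_one[OF A] S_def nat_pow_def)
    next
      case False
      show ?thesis
      proof (cases "y = x")
        case True then show ?thesis using cpos False S_def by simp
      next
        case F2: False
        then have "R x y" using that(1) S_def by simp
        then have "R (act x (c [^]\<^bsub>G\<^esub> n)) (act y (c [^]\<^bsub>G\<^esub> n))" by (rule Rinv[OF cl])
        moreover have "R x (act x (c [^]\<^bsub>G\<^esub> n))" using cpos[of n] False by simp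
        ultimately have "R x (act y (c [^]\<^bsub>G\<^esub> n))" by (rule Rtrans[rotated])
        then show ?thesis using S_def by simp
      qed
    qed
    have "act y (c [^]\<^bsub>G\<^esub> n \<otimes>\<^bsub>G\<^esub> h) = act (act y (c [^]\<^bsub>G\<^esub> n)) h"
      using act_mult[OF A cl that(2)] by simp
    moreover have "S bb' (act z h)" if "S bb' z" for bb' z
      using that Rinv[OF \<open>h \<in> carrier G\<close>, of x z] \<open>act x h = x\<close> S_def by auto
    ultimately show ?thesis using 1 by simp
  qed
  have cl2: "c [^]\<^bsub>G\<^esub> (n::nat) \<otimes>\<^bsub>G\<^esub> h \<in> carrier G" if "h \<in> carrier G" for n h
    using cl that G by (simp add: monoid.m_closed group.is_monoid)
  have s0: "S False x" by (simp add: S_def)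
  note s1 = step[OF s0 h(1) hf(1), of n1]
  note s2 = step[OF s1 h(2) hf(2), of n2]
  note s3 = step[OF s2 h(3) hf(3), of n3]
  note s4 = step[OF s3 h(4) hf(4), of n4]
  define P1 where "P1 = c [^]\<^bsub>G\<^esub> n1 \<otimes>\<^bsub>G\<^esub> h1"
  define P2 where "P2 = c [^]\<^bsub>G\<^esub> n2 \<otimes>\<^bsub>G\<^esub> h2"
  define P3 where "P3 = c [^]\<^bsub>G\<^esub> n3 \<otimes>\<^bsub>G\<^esub> h3"
  define P4 where "P4 = c [^]\<^bsub>G\<^esub> n4 \<otimes>\<^bsub>G\<^esub> h4"
  have P: "P1 \<in> carrier G" "P2 \<in> carrier G" "P3 \<in> carrier G" "P4 \<in> carrier G"
    using cl2 h unfolding P1_def P2_def P3_def P4_def by auto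
  have P12: "P1 \<otimes>\<^bsub>G\<^esub> P2 \<in> carrier G" using P G by (simp add: monoid.m_closed group.is_monoid)
  have P123: "P1 \<otimes>\<^bsub>G\<^esub> P2 \<otimes>\<^bsub>G\<^esub> P3 \<in> carrier G" using P12 P G by (simp add: monoid.m_closed group.is_monoid)
  have "act x (P1 \<otimes>\<^bsub>G\<^esub> P2 \<otimes>\<^bsub>G\<^esub> P3 \<otimes>\<^bsub>G\<^esub> P4) = act (act (act (act x P1) P2) P3) P4"
    using act_mult[OF A P123 P(4)] act_mult[OF A P12 P(3)] act_mult[OF A P(1) P(2)] by simp
  moreover have "P1 \<otimes>\<^bsub>G\<^esub> P2 \<otimes>\<^bsub>G\<^esub> P3 \<otimes>\<^bsub>G\<^esub> P4 = \<one>\<^bsub>G\<^esub>"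
    using w unfolding P1_def P2_def P3_def P4_def .
  ultimately have "act (act (act (act x P1) P2) P3) P4 = x" by (simp add: act_one[OF A])
  then have "S True x" using s4 n unfolding P1_def P2_def P3_def P4_def by simp
  then show False using Rirr S_def by simp
qed



lemma gcancel1: "group G \<Longrightarrow> x \<in> carrier G \<Longrightarrow> a \<in> carrier G \<Longrightarrow> x \<otimes>\<^bsub>G\<^esub> a \<otimes>\<^bsub>G\<^esub> inv\<^bsub>G\<^esub> a = x"
proof -
  assume G: "group G" and x: "x \<in> carrier G" and a: "a \<in> carrier G"
  interpret group G by (rule G)
  show ?thesis using x a by (simp add: m_assoc)
qed
lemma gcancel2: "group G \<Longrightarrow> x \<in> carrier G \<Longrightarrow> a \<in> carrier G \<Longrightarrow> x \<otimes>\<^bsub>G\<^esub> inv\<^bsub>G\<^esub> a \<otimes>\<^bsub>G\<^esub> a = x"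
  by (metis group.inv_closed group.inv_inv gcancel1)

lemma fix_mult:
  assumes "order_pres_right_action G act" "g \<in> carrier G" "h \<in> carrier G" "act x g = x" "act x h = x"
  shows "act x (g \<otimes>\<^bsub>G\<^esub> h) = x"
  using act_mult[OF assms(1-3)] assms(4,5) by simp

lemma powsplit:
  assumes "group G" "g \<in> carrier G"
  shows "z \<ge> 0 \<Longrightarrow> g [^]\<^bsub>G\<^esub> (z::int) = g [^]\<^bsub>G\<^esub> (nat z)"
    and "z \<le> 0 \<Longrightarrow> g [^]\<^bsub>G\<^esub> (z::int) = (inv\<^bsub>G\<^esub> g) [^]\<^bsub>G\<^esub> (nat (-z))"
proof -
  assume "z \<ge> 0"
  then have f: "(z < 0) = False" by simp
  show "g [^]\<^bsub>G\<^esub> (z::int) = g [^]\<^bsub>G\<^esub> (nat z)"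
    by (simp only: int_pow_def2 f if_False)
next
  assume z: "z \<le> 0"
  show "g [^]\<^bsub>G\<^esub> (z::int) = (inv\<^bsub>G\<^esub> g) [^]\<^bsub>G\<^esub> (nat (-z))"
  proof (cases "z = 0")
    case True
    have "nat (-z) = 0" using True by simp
    then show ?thesis using True by (simp only: int_pow_0 nat_pow_0)
  next
    case False
    then have f: "(z < 0) = True" using z by simp
    show ?thesis
      by (simp only: int_pow_def2 f if_True group.nat_pow_inv[OF assms])
  qed
qed



theorem mainTheorem7:
  fixes G :: "'g monoid" and p q :: int and a b k :: 'g
    and act :: "'p::order \<Rightarrow> 'g \<Rightarrow> 'p" and x :: 'p
  assumes "coprime p q"
    and "is_Gpq G p q a b"
    and "k \<in> carrier G"
    and "k [^]\<^bsub>G\<^esub> q = pm G a b"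
    and "k [^]\<^bsub>G\<^esub> (-p) = pl G a b"
    and "order_pres_right_action G act"
    and "(act x k = x \<and> (x \<le> act x a \<or> act x a \<le> x)) \<or>
         (act x a = x \<and> (x \<le> act x k \<or> act x k \<le> x))"
  shows "\<forall>g \<in> carrier G. act x g = x"
proof -
  note cop = assms(1) and kc = assms(3) and A = assms(6)
  have grp: "group G" and rels: "Gpq_rels G p q a b" and gen: "generate G {a, b} = carrier G"
    using assms(2) unfolding is_Gpq_def by auto
  interpret G: group G by (rule grp)
  have ac: "a \<in> carrier G" and bc: "b \<in> carrier G" using rels unfolding Gpq_rels_def by auto
  define u0 where "u0 = pm G a b"
  define w0 where "w0 = a \<otimes>\<^bsub>G\<^esub> inv\<^bsub>G\<^esub> b \<otimes>\<^bsub>G\<^esub> (a \<otimes>\<^bsub>G\<^esub> a)"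
  define v where "v = inv\<^bsub>G\<^esub> w0"
  define s where "s = p - 18 * q"
  have sq2: "y [^]\<^bsub>G\<^esub> (2::int) = y \<otimes>\<^bsub>G\<^esub> y" if "y \<in> carrier G" for y
  proof -
    have "y [^]\<^bsub>G\<^esub> (2::int) = y [^]\<^bsub>G\<^esub> (2::nat)"
      using int_pow_int[of G y 2] by simp
    also have "\<dots> = y \<otimes>\<^bsub>G\<^esub> y" using that by (simp add: numeral_2_eq_2)
    finally show ?thesis .
  qed
  have u0eq: "u0 = inv\<^bsub>G\<^esub> a \<otimes>\<^bsub>G\<^esub> (inv\<^bsub>G\<^esub> b \<otimes>\<^bsub>G\<^esub> inv\<^bsub>G\<^esub> b)"
    unfolding u0_def pm_def using bc
    by (simp add: G.int_pow_neg[of b 2, simplified] sq2 G.inv_mult_group)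
  have uc: "u0 \<in> carrier G" using u0eq ac bc by simp
  have w0c: "w0 \<in> carrier G" unfolding w0_def using ac bc by simp
  have vc: "v \<in> carrier G" unfolding v_def using w0c by simp
  have pleq: "pl G a b = w0 \<otimes>\<^bsub>G\<^esub> u0 [^]\<^bsub>G\<^esub> (-18::int)"
    unfolding pl_def w0_def u0_def using ac sq2 by simp
  have uk: "u0 = k [^]\<^bsub>G\<^esub> q" using assms(4) u0_def by simp
  have w0k: "w0 = k [^]\<^bsub>G\<^esub> (18 * q - p)"
  proof -
    have "k [^]\<^bsub>G\<^esub> (-p) = w0 \<otimes>\<^bsub>G\<^esub> k [^]\<^bsub>G\<^esub> (q * -18)"
      using assms(5) pleq uk G.int_pow_pow[OF kc] by simp
    then have "w0 = k [^]\<^bsub>G\<^esub> (-p) \<otimes>\<^bsub>G\<^esub> inv\<^bsub>G\<^esub> (k [^]\<^bsub>G\<^esub> (q * -18))"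
      using w0c kc by (simp add: G.inv_solve_right)
    also have "\<dots> = k [^]\<^bsub>G\<^esub> (-p - q * -18)" by (rule G.int_pow_diff[OF kc, symmetric])
    also have "-p - q * -18 = 18 * q - p" by simp
    finally show ?thesis .
  qed
  have vk: "v = k [^]\<^bsub>G\<^esub> s"
    unfolding v_def w0k s_def using kc G.int_pow_neg[OF kc, of "18 * q - p"] by simp
  have veq: "v = inv\<^bsub>G\<^esub> a \<otimes>\<^bsub>G\<^esub> inv\<^bsub>G\<^esub> a \<otimes>\<^bsub>G\<^esub> b \<otimes>\<^bsub>G\<^esub> inv\<^bsub>G\<^esub> a"
    unfolding v_def w0_def using ac bc by (simp add: G.inv_mult_group G.m_assoc)
  have beq: "b = a \<otimes>\<^bsub>G\<^esub> a \<otimes>\<^bsub>G\<^esub> v \<otimes>\<^bsub>G\<^esub> a"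
    unfolding veq using ac bc
    by (simp add: G.m_assoc[symmetric] gcancel1[OF grp] gcancel2[OF grp])
  have T0: "a \<otimes>\<^bsub>G\<^esub> a \<otimes>\<^bsub>G\<^esub> v \<otimes>\<^bsub>G\<^esub> (a \<otimes>\<^bsub>G\<^esub> a \<otimes>\<^bsub>G\<^esub> a) \<otimes>\<^bsub>G\<^esub> v
      \<otimes>\<^bsub>G\<^esub> (a \<otimes>\<^bsub>G\<^esub> a) \<otimes>\<^bsub>G\<^esub> u0 = \<one>\<^bsub>G\<^esub>"
    unfolding veq u0eq using ac bc
    by (simp add: G.m_assoc[symmetric] gcancel1[OF grp] gcancel2[OF grp])
  have R1: "a \<otimes>\<^bsub>G\<^esub> a \<otimes>\<^bsub>G\<^esub> b \<otimes>\<^bsub>G\<^esub> (a \<otimes>\<^bsub>G\<^esub> a) \<otimes>\<^bsub>G\<^esub> (b \<otimes>\<^bsub>G\<^esub> b)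
       \<otimes>\<^bsub>G\<^esub> inv\<^bsub>G\<^esub> a \<otimes>\<^bsub>G\<^esub> (b \<otimes>\<^bsub>G\<^esub> b) = \<one>\<^bsub>G\<^esub>"
    using rels ac bc sq2 unfolding Gpq_rels_def by simp
  have Rw: "a \<otimes>\<^bsub>G\<^esub> a \<otimes>\<^bsub>G\<^esub> a \<otimes>\<^bsub>G\<^esub> a \<otimes>\<^bsub>G\<^esub> v \<otimes>\<^bsub>G\<^esub> (a \<otimes>\<^bsub>G\<^esub> a \<otimes>\<^bsub>G\<^esub> a)
      \<otimes>\<^bsub>G\<^esub> inv\<^bsub>G\<^esub> u0 \<otimes>\<^bsub>G\<^esub> (inv\<^bsub>G\<^esub> a \<otimes>\<^bsub>G\<^esub> inv\<^bsub>G\<^esub> a)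
      \<otimes>\<^bsub>G\<^esub> inv\<^bsub>G\<^esub> u0 \<otimes>\<^bsub>G\<^esub> inv\<^bsub>G\<^esub> a = \<one>\<^bsub>G\<^esub>"
  proof -
    have "a \<otimes>\<^bsub>G\<^esub> a \<otimes>\<^bsub>G\<^esub> a \<otimes>\<^bsub>G\<^esub> a \<otimes>\<^bsub>G\<^esub> v \<otimes>\<^bsub>G\<^esub> (a \<otimes>\<^bsub>G\<^esub> a \<otimes>\<^bsub>G\<^esub> a)
      \<otimes>\<^bsub>G\<^esub> inv\<^bsub>G\<^esub> u0 \<otimes>\<^bsub>G\<^esub> (inv\<^bsub>G\<^esub> a \<otimes>\<^bsub>G\<^esub> inv\<^bsub>G\<^esub> a)
      \<otimes>\<^bsub>G\<^esub> inv\<^bsub>G\<^esub> u0 \<otimes>\<^bsub>G\<^esub> inv\<^bsub>G\<^esub> a =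
      a \<otimes>\<^bsub>G\<^esub> a \<otimes>\<^bsub>G\<^esub> b \<otimes>\<^bsub>G\<^esub> (a \<otimes>\<^bsub>G\<^esub> a) \<otimes>\<^bsub>G\<^esub> (b \<otimes>\<^bsub>G\<^esub> b)
       \<otimes>\<^bsub>G\<^esub> inv\<^bsub>G\<^esub> a \<otimes>\<^bsub>G\<^esub> (b \<otimes>\<^bsub>G\<^esub> b)"
      unfolding veq u0eq using ac bc
      by (simp add: G.inv_mult_group G.m_assoc[symmetric] gcancel1[OF grp] gcancel2[OF grp])
    then show ?thesis using R1 by simp
  qed
  have fin: "\<forall>g \<in> carrier G. act x g = x" if fa: "act x a = x" and fk: "act x k = x"
  proof -
    have fv: "act x v = x" using fix_int_pow[OF grp A kc fk] vk by simp
    have fb: "act x b = x"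
    proof -
      have c1: "a \<otimes>\<^bsub>G\<^esub> a \<in> carrier G" using ac by simp
      have c2: "a \<otimes>\<^bsub>G\<^esub> a \<otimes>\<^bsub>G\<^esub> v \<in> carrier G" using ac vc by simp
      have f1: "act x (a \<otimes>\<^bsub>G\<^esub> a) = x" by (rule fix_mult[OF A ac ac fa fa])
      have f2: "act x (a \<otimes>\<^bsub>G\<^esub> a \<otimes>\<^bsub>G\<^esub> v) = x" by (rule fix_mult[OF A c1 vc f1 fv])
      have "act x (a \<otimes>\<^bsub>G\<^esub> a \<otimes>\<^bsub>G\<^esub> v \<otimes>\<^bsub>G\<^esub> a) = x" by (rule fix_mult[OF A c2 ac f2 fa])
      then show ?thesis using beq by simp
    qed
    have "act x g = x" if "g \<in> generate G {a, b}" for g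
      using that
    proof (induction rule: generate.induct)
      case one then show ?case by (simp add: act_one[OF A])
    next
      case (incl h) then show ?case using fa fb by auto
    next
      case (inv h) then show ?case using fa fb fix_inv[OF grp A] ac bc by auto
    next
      case (eng h1 h2) then show ?case using fix_mult[OF A] gen by auto
    qed
    then show ?thesis using gen by auto
  qed
  have Rlt: "\<And>y z g. g \<in> carrier G \<Longrightarrow> y < z \<Longrightarrow> act y g < act z g"
    using lt_pres[OF grp A] by blast
  have Rgt: "\<And>y z g. g \<in> carrier G \<Longrightarrow> z < y \<Longrightarrow> act z g < act y g"
    using lt_pres[OF grp A] by blast
  have lt_tr: "\<And>y z w::'p. y < z \<Longrightarrow> z < w \<Longrightarrow> y < w" by (rule less_trans)
  have gt_tr: "\<And>y z w::'p. z < y \<Longrightarrow> w < z \<Longrightarrow> w < y" using less_trans by blast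
  have lt_ir: "\<And>y::'p. \<not> y < y" by simp
  show ?thesis
  proof (cases "act x k = x")
    case fk: True
    show ?thesis
    proof (cases "act x a = x")
      case True then show ?thesis using fin fk by simp
    next
      case False
      have fu: "act x u0 = x" using fix_int_pow[OF grp A kc fk] uk by simp
      have fv: "act x v = x" using fix_int_pow[OF grp A kc fk] vk by simp
      have w: "(a [^]\<^bsub>G\<^esub> Suc (Suc 0) \<otimes>\<^bsub>G\<^esub> v) \<otimes>\<^bsub>G\<^esub> (a [^]\<^bsub>G\<^esub> Suc (Suc (Suc 0)) \<otimes>\<^bsub>G\<^esub> v)
       \<otimes>\<^bsub>G\<^esub> (a [^]\<^bsub>G\<^esub> Suc (Suc 0) \<otimes>\<^bsub>G\<^esub> u0) \<otimes>\<^bsub>G\<^esub> (a [^]\<^bsub>G\<^esub> (0::nat) \<otimes>\<^bsub>G\<^esub> \<one>\<^bsub>G\<^esub>) = \<one>\<^bsub>G\<^esub>"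
        using T0 ac vc uc by (simp add: G.m_assoc)
      have "x < act x a \<or> act x a < x" using False assms(7) fk by auto
      then show ?thesis
      proof
        assume h: "x < act x a"
        show ?thesis
        proof -
          have nn: "0 < Suc (Suc 0) \<or> 0 < Suc (Suc (Suc 0)) \<or> 0 < Suc (Suc 0) \<or> 0 < (0::nat)" by simp
          have False by (rule word4[where R="(<)", OF grp A Rlt lt_tr lt_ir ac h vc vc uc G.one_closed fv fv fu act_one[OF A] nn w])
          then show ?thesis by (rule FalseE)
        qed
      next
        assume h: "act x a < x"
        show ?thesis
        proof -
          have nn: "0 < Suc (Suc 0) \<or> 0 < Suc (Suc (Suc 0)) \<or> 0 < Suc (Suc 0) \<or> 0 < (0::nat)" by simp
          have False by (rule word4[where R="\<lambda>y z. z < y", OF grp A Rgt gt_tr lt_ir ac h vc vc uc G.one_closed fv fv fu act_one[OF A] nn w])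
          then show ?thesis by (rule FalseE)
        qed
      qed
    qed
  next
    case nk: False
    have fa: "act x a = x" using assms(7) nk by auto
    have faa: "act x (a \<otimes>\<^bsub>G\<^esub> a) = x" using fix_mult[OF A ac ac fa fa] .
    have faaa: "act x (a \<otimes>\<^bsub>G\<^esub> a \<otimes>\<^bsub>G\<^esub> a) = x" using fix_mult[OF A _ ac faa fa] ac by simp
    have faaaa: "act x (a \<otimes>\<^bsub>G\<^esub> a \<otimes>\<^bsub>G\<^esub> a \<otimes>\<^bsub>G\<^esub> a) = x" using fix_mult[OF A _ ac faaa fa] ac by simp
    have fia: "act x (inv\<^bsub>G\<^esub> a) = x" using fix_inv[OF grp A ac fa] .
    have fiaa: "act x (inv\<^bsub>G\<^esub> a \<otimes>\<^bsub>G\<^esub> inv\<^bsub>G\<^esub> a) = x" using fix_mult[OF A _ _ fia fia] ac by simp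
    have K: False if Rinv: "\<And>y z g. g \<in> carrier G \<Longrightarrow> R y z \<Longrightarrow> R (act y g) (act z g)"
      and Rtrans: "\<And>y z w. R y z \<Longrightarrow> R z w \<Longrightarrow> R y w"
      and Rirr: "\<And>y. \<not> R y y"
      and cc: "c \<in> carrier G" and Rc: "R x (act x c)"
      and ex: "\<exists>i j. v = c [^]\<^bsub>G\<^esub> (i::nat) \<and> (u0 = c [^]\<^bsub>G\<^esub> (j::nat) \<or> inv\<^bsub>G\<^esub> u0 = c [^]\<^bsub>G\<^esub> j) \<and> 0 < i + j"
      for R c
    proof -
      obtain i j where ij: "v = c [^]\<^bsub>G\<^esub> (i::nat)" "u0 = c [^]\<^bsub>G\<^esub> (j::nat) \<or> inv\<^bsub>G\<^esub> u0 = c [^]\<^bsub>G\<^esub> j" "0 < i + j"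
        using ex by blast
      have n: "0 < (0::nat) \<or> 0 < i \<or> 0 < i \<or> 0 < j" using ij(3) by auto
      have n': "0 < (0::nat) \<or> 0 < i \<or> 0 < j \<or> 0 < j" using ij(3) by auto
      from ij(2) show False
      proof
        assume uj: "u0 = c [^]\<^bsub>G\<^esub> j"
        have w: "(c [^]\<^bsub>G\<^esub> (0::nat) \<otimes>\<^bsub>G\<^esub> (a \<otimes>\<^bsub>G\<^esub> a)) \<otimes>\<^bsub>G\<^esub> (c [^]\<^bsub>G\<^esub> i \<otimes>\<^bsub>G\<^esub> (a \<otimes>\<^bsub>G\<^esub> a \<otimes>\<^bsub>G\<^esub> a))
          \<otimes>\<^bsub>G\<^esub> (c [^]\<^bsub>G\<^esub> i \<otimes>\<^bsub>G\<^esub> (a \<otimes>\<^bsub>G\<^esub> a)) \<otimes>\<^bsub>G\<^esub> (c [^]\<^bsub>G\<^esub> j \<otimes>\<^bsub>G\<^esub> \<one>\<^bsub>G\<^esub>) = \<one>\<^bsub>G\<^esub>"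
          using T0 ac vc uc unfolding ij(1)[symmetric] uj[symmetric] by (simp add: G.m_assoc)
        show False using word4[OF grp A Rinv Rtrans Rirr cc Rc _ _ _ G.one_closed faa faaa faa act_one[OF A] n w] ac
          by simp
      next
        assume uj: "inv\<^bsub>G\<^esub> u0 = c [^]\<^bsub>G\<^esub> j"
        have w: "(c [^]\<^bsub>G\<^esub> (0::nat) \<otimes>\<^bsub>G\<^esub> (a \<otimes>\<^bsub>G\<^esub> a \<otimes>\<^bsub>G\<^esub> a \<otimes>\<^bsub>G\<^esub> a)) \<otimes>\<^bsub>G\<^esub> (c [^]\<^bsub>G\<^esub> i \<otimes>\<^bsub>G\<^esub> (a \<otimes>\<^bsub>G\<^esub> a \<otimes>\<^bsub>G\<^esub> a))
          \<otimes>\<^bsub>G\<^esub> (c [^]\<^bsub>G\<^esub> j \<otimes>\<^bsub>G\<^esub> (inv\<^bsub>G\<^esub> a \<otimes>\<^bsub>G\<^esub> inv\<^bsub>G\<^esub> a)) \<otimes>\<^bsub>G\<^esub> (c [^]\<^bsub>G\<^esub> j \<otimes>\<^bsub>G\<^esub> inv\<^bsub>G\<^esub> a) = \<one>\<^bsub>G\<^esub>"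
          using Rw ac vc uc unfolding ij(1)[symmetric] uj[symmetric] by (simp add: G.m_assoc)
        show False using word4[OF grp A Rinv Rtrans Rirr cc Rc _ _ _ _ faaaa faaa fiaa fia n' w] ac
          by simp
      qed
    qed
    have ikc: "inv\<^bsub>G\<^esub> k \<in> carrier G" using kc by simp
    have sq0: "\<not> (s = 0 \<and> q = 0)" using cop unfolding s_def by auto
    have iu: "inv\<^bsub>G\<^esub> u0 = k [^]\<^bsub>G\<^esub> (-q)" unfolding uk by (rule G.int_pow_neg[OF kc, symmetric])
    have exk: "\<exists>i j. v = k [^]\<^bsub>G\<^esub> (i::nat) \<and> (u0 = k [^]\<^bsub>G\<^esub> (j::nat) \<or> inv\<^bsub>G\<^esub> u0 = k [^]\<^bsub>G\<^esub> j) \<and> 0 < i + j"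
      if s0: "s \<ge> 0"
    proof -
      have v1: "v = k [^]\<^bsub>G\<^esub> (nat s)" unfolding vk by (rule powsplit(1)[OF grp kc s0])
      show ?thesis
      proof (cases "q \<ge> 0")
        case True
        have "u0 = k [^]\<^bsub>G\<^esub> (nat q)" unfolding uk by (rule powsplit(1)[OF grp kc True])
        moreover have "0 < nat s + nat q" using sq0 s0 True by linarith
        ultimately show ?thesis using v1 by blast
      next
        case False
        have "inv\<^bsub>G\<^esub> u0 = k [^]\<^bsub>G\<^esub> (nat (-q))" unfolding iu
          by (rule powsplit(1)[OF grp kc]) (use False in linarith)
        moreover have "0 < nat s + nat (-q)" using False by linarith
        ultimately show ?thesis using v1 by blast
      qed
    qed
    have exik: "\<exists>i j. v = (inv\<^bsub>G\<^esub> k) [^]\<^bsub>G\<^esub> (i::nat) \<and> (u0 = (inv\<^bsub>G\<^esub> k) [^]\<^bsub>G\<^esub> (j::nat) \<or> inv\<^bsub>G\<^esub> u0 = (inv\<^bsub>G\<^esub> k) [^]\<^bsub>G\<^esub> j) \<and> 0 < i + j"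
      if s0: "s \<le> 0"
    proof -
      have v1: "v = (inv\<^bsub>G\<^esub> k) [^]\<^bsub>G\<^esub> (nat (-s))" unfolding vk by (rule powsplit(2)[OF grp kc s0])
      show ?thesis
      proof (cases "q \<le> 0")
        case True
        have "u0 = (inv\<^bsub>G\<^esub> k) [^]\<^bsub>G\<^esub> (nat (-q))" unfolding uk by (rule powsplit(2)[OF grp kc True])
        moreover have "0 < nat (-s) + nat (-q)" using sq0 s0 True by linarith
        ultimately show ?thesis using v1 by blast
      next
        case False
        have "inv\<^bsub>G\<^esub> u0 = (inv\<^bsub>G\<^esub> k) [^]\<^bsub>G\<^esub> (nat (- (-q)))" unfolding iu
          by (rule powsplit(2)[OF grp kc]) (use False in linarith)
        moreover have "nat (- (-q)) = nat q" by simp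
        moreover have "0 < nat (-s) + nat q" using False by linarith
        ultimately show ?thesis using v1 by metis
      qed
    qed
    have "x < act x k \<or> act x k < x" using nk assms(7) fa by auto
    then show ?thesis
    proof
      assume h: "x < act x k"
      have h': "act x (inv\<^bsub>G\<^esub> k) < x"
        using Rlt[OF ikc h] act_cancel[OF grp A kc] by simp
      show ?thesis
      proof (cases "s \<ge> 0")
        case True
        have False by (rule K[where R="(<)", OF Rlt lt_tr lt_ir kc h exk[OF True]])
        then show ?thesis by (rule FalseE)
      next
        case False
        have sle: "s \<le> 0" using False by simp
        have False by (rule K[where R="\<lambda>y z. z < y", OF Rgt gt_tr lt_ir ikc h' exik[OF sle]])
        then show ?thesis by (rule FalseE)
      qed
    next
      assume h: "act x k < x"
      have h': "x < act x (inv\<^bsub>G\<^esub> k)"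
        using Rlt[OF ikc h] act_cancel[OF grp A kc] by simp
      show ?thesis
      proof (cases "s \<ge> 0")
        case True
        have False by (rule K[where R="\<lambda>y z. z < y", OF Rgt gt_tr lt_ir kc h exk[OF True]])
        then show ?thesis by (rule FalseE)
      next
        case False
        have sle: "s \<le> 0" using False by simp
        have False by (rule K[where R="(<)", OF Rlt lt_tr lt_ir ikc h' exik[OF sle]])
        then show ?thesis by (rule FalseE)
      qed
    qed
  qed
qed

end
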